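(* The convolution $(g_1\ast g_2)(A)=\min_{B\subseteq A}\,[g_1(B)+g_2(A\setminus B)]$ of two submodular functions $g_1,g_2$ is not in general submodular. In particular, there exist a directed graph $\mathcal{G}=(\mathcal{V},\mathcal{E})$ and a normalized monotone nondecreasing submodular $f:2^{\mathcal{E}}\to\mathbb{R}_+$ such that, with $\mathrm{cap}^{\mathrm{out}}(A)=\sum_{v\in\mathcal{V}}f(A\cap\delta^+(v))$ and $\mathrm{cap}^{\mathrm{in}}(A)=\sum_{v\in\mathcal{V}}f(A\cap\delta^-(v))$, the function $h=\mathrm{cap}^{\mathrm{out}}\ast\mathrm{cap}^{\mathrm{in}}$ (the cut cost function of the dual of the corresponding polymatroidal maximum flow) is not submodular.
   Context: $\delta^+(v)$ and $\delta^-(v)$ denote the sets of edges leaving and entering node $v$. A set function $g$ on $2^{\mathcal{E}}$ is submodular if $g(A)+g(B)\ge g(A\cup B)+g(A\cap B)$ for all $A,B\subseteq\mathcal{E}$. *)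

theory Defs
  imports Main "Graph_Theory.Digraph"
begin

definition submodular_on :: "'e set \<Rightarrow> ('e set \<Rightarrow> real) \<Rightarrow> bool" where
  "submodular_on E g \<longleftrightarrow>
     (\<forall>A B. A \<subseteq> E \<longrightarrow> B \<subseteq> E \<longrightarrow> g A + g B \<ge> g (A \<union> B) + g (A \<inter> B))"

definition monotone_on_subsets :: "'e set \<Rightarrow> ('e set \<Rightarrow> real) \<Rightarrow> bool" where
  "monotone_on_subsets E g \<longleftrightarrow> (\<forall>A B. A \<subseteq> B \<longrightarrow> B \<subseteq> E \<longrightarrow> g A \<le> g B)"

definition convolution :: "('e set \<Rightarrow> real) \<Rightarrow> ('e set \<Rightarrow> real) \<Rightarrow> 'e set \<Rightarrow> real" where
  "convolution g1 g2 A = Min ((\<lambda>B. g1 B + g2 (A - B)) ` Pow A)"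

definition cap_out :: "('v, 'e) pre_digraph \<Rightarrow> ('e set \<Rightarrow> real) \<Rightarrow> 'e set \<Rightarrow> real" where
  "cap_out G f A = (\<Sum>v\<in>verts G. f (A \<inter> out_arcs G v))"

definition cap_in :: "('v, 'e) pre_digraph \<Rightarrow> ('e set \<Rightarrow> real) \<Rightarrow> 'e set \<Rightarrow> real" where
  "cap_in G f A = (\<Sum>v\<in>verts G. f (A \<inter> in_arcs G v))"

end

theory Submission
  imports Defs
begin

definition GG :: "(nat, nat) pre_digraph" where
  "GG = \<lparr>verts = {0,1,2}, arcs = {0,1,2}, tail = (\<lambda>e. if e = 2 then 1 else 0),
         head = (\<lambda>e. if e = 0 then 1 else 2)\<rparr>"

definition ff :: "nat set \<Rightarrow> real" where
  "ff A = (if A = {} then 0 else 1)"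

lemma fin: "fin_digraph GG"
  unfolding fin_digraph_def fin_digraph_axioms_def wf_digraph_def GG_def by auto

lemma sub: "submodular_on (arcs GG) ff"
  unfolding submodular_on_def ff_def by auto

lemma mono: "monotone_on_subsets (arcs GG) ff"
  unfolding monotone_on_subsets_def ff_def by auto

lemma outs: "out_arcs GG 0 = {0,1}" "out_arcs GG 1 = {2}" "out_arcs GG 2 = {}"
  "in_arcs GG 0 = {}" "in_arcs GG 1 = {0}" "in_arcs GG 2 = {1,2}"
  by (auto simp: GG_def out_arcs_def in_arcs_def)

lemmas outs' = outs[simplified One_nat_def]

lemma vG: "verts GG = {0,1,2}" by (simp add: GG_def)
lemma aG: "arcs GG = {0,1,2}" by (simp add: GG_def)

lemma co: "cap_out GG ff A = ff (A \<inter> {0,1}) + ff (A \<inter> {2})"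
  unfolding cap_out_def vG by (simp add: outs outs' ff_def)
lemma ci: "cap_in GG ff A = ff (A \<inter> {0}) + ff (A \<inter> {1,2})"
  unfolding cap_in_def vG by (simp add: outs outs' ff_def)

lemma h1: "convolution (cap_out GG ff) (cap_in GG ff) {0,1} \<le> 1"
  unfolding convolution_def
  by (subst Min_le_iff) (auto simp: co ci ff_def Pow_insert)

lemma h2: "convolution (cap_out GG ff) (cap_in GG ff) {1,2} \<le> 1"
  unfolding convolution_def
  by (subst Min_le_iff) (auto simp: co ci ff_def Pow_insert)

lemma h3: "convolution (cap_out GG ff) (cap_in GG ff) {0,1,2} \<ge> 2"
  unfolding convolution_def
  by (subst Min_ge_iff) (auto simp: co ci ff_def Pow_insert)

lemma h4: "convolution (cap_out GG ff) (cap_in GG ff) {1} \<ge> 1"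
  unfolding convolution_def
  by (subst Min_ge_iff) (auto simp: co ci ff_def Pow_insert)

theorem proposition2:
  shows "\<exists>(G :: (nat, nat) pre_digraph) (f :: nat set \<Rightarrow> real).
           fin_digraph G \<and>
           f {} = 0 \<and>
           (\<forall>A. A \<subseteq> arcs G \<longrightarrow> f A \<ge> 0) \<and>
           monotone_on_subsets (arcs G) f \<and>
           submodular_on (arcs G) f \<and>
           \<not> submodular_on (arcs G) (convolution (cap_out G f) (cap_in G f))"
proof (intro exI conjI)
  show "\<not> submodular_on (arcs GG) (convolution (cap_out GG ff) (cap_in GG ff))"
  proof
    assume "submodular_on (arcs GG) (convolution (cap_out GG ff) (cap_in GG ff))"
    hence "convolution (cap_out GG ff) (cap_in GG ff) {0,1} + convolution (cap_out GG ff) (cap_in GG ff) {1,2}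
       \<ge> convolution (cap_out GG ff) (cap_in GG ff) ({0,1} \<union> {1,2}) + convolution (cap_out GG ff) (cap_in GG ff) ({0,1} \<inter> {1,2})"
      unfolding submodular_on_def aG
      by (elim allE[of _ "{0,1}"] allE[of _ "{1,2}"]) simp
    moreover have "({0,1} \<union> {1,2}) = ({0,1,2}::nat set)" "({0,1} \<inter> {1,2}) = ({1}::nat set)" by auto
    ultimately show False using h1 h2 h3 h4 by simp
  qed
qed (auto simp: fin sub mono ff_def)

end
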